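(* Let $q$ be a prime power, $m>3$, $n=q^{2m}-1$, and define $Z_{des}=\{(x,y):1\le x,y\le n,\ xy<q^{2m}-1-q^{m-1}\}$ and, for integers $0\le k\le (2m-1)/2$, $Z_{des,k}=\{(x,y)\in Z_{des}: q^k-1<x\le q^{k+1}-1\}$. For odd $l\in\{1,3,\dots,2m-1\}$ let $f(x,y,l)=(-xq^l\bmod n)(-yq^l\bmod n)$. Then: (a) For all $0\le k\le(2m-1)/2$, $(x,y)\in Z_{des,k}$ and odd $l\in\{1,\dots,2m-1\}$ with $l\ne 2m-k-1$: $f(x,y,l)\ge q^{2m}-1-q^{m-1}$ if $m$ is even, and $f(x,y,l)\ge q^{2m}-1-q^{m}$ if $m$ is odd; these bounds are attained at $k=0$, $x=1$, $y=q^{2m}-1-q^{2m-l}$ with $l=m-1$ ($m$ even), respectively $l=m$ ($m$ odd). (b) For all $0\le k\le(2m-1)/2$, $(x,y)\in Z_{des,k}$ and $l=2m-k-1$ odd: if $m$ is odd then $f(x,y,l)\ge (q^m-1)^2$, with equality at $k=m-1$, $l=m$, $x=y=q^m-1$; if $m$ is even then $f(x,y,l)\ge q^{2m}-1$.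
   Context: Here $a\bmod n$ denotes the least nonnegative residue of $a$ modulo $n$. *)

theory Defs
  imports Main "HOL-Number_Theory.Number_Theory"
begin

definition nn :: "nat \<Rightarrow> nat \<Rightarrow> int" where
  "nn q m = int q ^ (2*m) - 1"

definition Zdes :: "nat \<Rightarrow> nat \<Rightarrow> (int \<times> int) set" where
  "Zdes q m = {(x, y). 1 \<le> x \<and> x \<le> nn q m \<and> 1 \<le> y \<and> y \<le> nn q m \<and>
                       x * y < int q ^ (2*m) - 1 - int q ^ (m - 1)}"

definition Zdesk :: "nat \<Rightarrow> nat \<Rightarrow> nat \<Rightarrow> (int \<times> int) set" where
  "Zdesk q m k = {(x, y) \<in> Zdes q m. int q ^ k - 1 < x \<and> x \<le> int q ^ (k+1) - 1}"

text \<open>f(x,y,l) = (-x q^l mod n)(-y q^l mod n); Isabelle's int mod with positive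
  modulus gives the least nonnegative residue.\<close>
definition fval :: "nat \<Rightarrow> nat \<Rightarrow> int \<Rightarrow> int \<Rightarrow> nat \<Rightarrow> int" where
  "fval q m x y l = ((- x * int q ^ l) mod nn q m) * ((- y * int q ^ l) mod nn q m)"

end

theory Submission
  imports Defs
begin


lemma rot:
  fixes p P z :: int
  assumes "p \<ge> 1" "P \<ge> 1" "1 \<le> z" "z \<le> p*P - 1"
  shows "(- z * p) mod (p*P - 1) = (P - 1 - z mod P)*p + (p - 1 - z div P)"
proof -
  define z0 where "z0 = z mod P"
  define z1 where "z1 = z div P"
  have zd: "z = z1*P + z0" unfolding z0_def z1_def by simp
  have z0r: "0 \<le> z0" "z0 < P" unfolding z0_def using assms by auto
  have z1n: "z1 \<ge> 0" unfolding z1_def using assms by (simp add: div_int_pos_iff)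
  have "z1*P \<le> z" using zd z0r by simp
  also have "z < p*P" using assms by simp
  finally have "z1 < p" using assms(2) by (simp add: mult_less_cancel_right)
  define r where "r = (P - 1 - z0)*p + (p - 1 - z1)"
  have r0: "r \<ge> 0" unfolding r_def using z0r \<open>z1 < p\<close> assms by simp
  have "r \<le> (P - 1)*p + (p - 1)" unfolding r_def using z0r z1n assms
    by (smt (verit, ccfv_SIG) mult_right_mono)
  moreover have "r \<noteq> (P - 1)*p + (p - 1)"
  proof
    assume "r = (P - 1)*p + (p - 1)"
    hence "z0 * p + z1 = 0" unfolding r_def by (simp add: algebra_simps)
    moreover have "z0*p \<ge> 0" using z0r assms by simp
    ultimately have "z0 = 0" "z1 = 0" using z1n assms z0r
      by (smt (verit) mult_pos_pos)+
    thus False using zd assms by simp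
  qed
  ultimately have rlt: "r < p*P - 1" by (simp add: algebra_simps)
  have eq: "- z * p = r + (-(z1+1)) * (p*P - 1)" unfolding r_def zd by (simp add: algebra_simps)
  have "(- z * p) mod (p*P - 1) = r mod (p*P - 1)" unfolding eq by simp
  also have "\<dots> = r" using r0 rlt by simp
  finally show ?thesis unfolding r_def z0_def z1_def .
qed


definition R :: "int \<Rightarrow> int \<Rightarrow> int \<Rightarrow> int" where
  "R p P z = (- z * p) mod (p*P - 1)"

lemma R_nn: "p*P \<ge> 2 \<Longrightarrow> R p P z \<ge> 0"
  unfolding R_def by simp

lemma R_form: "p \<ge> 1 \<Longrightarrow> P \<ge> 1 \<Longrightarrow> 1 \<le> z \<Longrightarrow> z \<le> p*P - 1 \<Longrightarrow>
   R p P z = (P - 1 - z mod P)*p + (p - 1 - z div P)"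
  unfolding R_def by (rule rot)

lemma R_low:
  assumes "p \<ge> 1" "P \<ge> 1" "1 \<le> z" "z \<le> p*P - 1"
  shows "R p P z \<ge> p - 1 - z div P"
proof -
  have "P - 1 - z mod P \<ge> 0" using assms by simp
  hence "(P - 1 - z mod P)*p \<ge> 0" using assms by simp
  thus ?thesis using R_form[OF assms] by simp
qed

lemma R_ge_p:
  assumes "p \<ge> 1" "P \<ge> 1" "1 \<le> z" "z \<le> p*P - 1" "z mod P \<noteq> P - 1"
  shows "R p P z \<ge> p"
proof -
  have "z div P * P \<le> z" using assms
    using div_mult_mod_eq[of z P] pos_mod_sign[of P z] by linarith
  hence "z div P * P < p * P" using assms by linarith
  hence "z div P < p" using assms mult_right_less_imp_less[of "z div P" P p] by simp
  have "z mod P < P - 1" using assms pos_mod_bound[of P z] by linarith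
  hence "P - 1 - z mod P \<ge> 1" by simp
  hence "(P - 1 - z mod P)*p \<ge> p" using assms by simp
  thus ?thesis using R_form[OF assms(1-4)] \<open>z div P < p\<close> by simp
qed

lemma R_eq:
  assumes "p \<ge> 1" "P \<ge> 1" "1 \<le> z" "z \<le> p*P - 1" "z mod P = P - 1"
  shows "R p P z = p - 1 - z div P" "z = (z div P + 1)*P - 1"
  using R_form[OF assms(1-4)] assms(5) apply simp
proof -
  have "(z div P + 1)*P - 1 = z div P * P + (P - 1)" by (simp add: algebra_simps)
  thus "z = (z div P + 1)*P - 1" using assms(5) div_mult_mod_eq[of z P] by linarith
qed

lemma R_small:
  assumes "p \<ge> 1" "P \<ge> 1" "1 \<le> z" "z < P"
  shows "R p P z = p*P - 1 - z*p"
proof -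
  have "z \<le> p*P - 1" using assms by (smt (verit) mult_le_cancel_right1)
  have "z div P = 0" "z mod P = z" using assms by auto
  thus ?thesis using R_form[OF assms(1-3) \<open>z \<le> p*P - 1\<close>] by (simp add: algebra_simps)
qed



lemma pw_split: "(q::int)^l * q^(2*m - l) = q^(2*m)" if "l \<le> 2*m"
  using that by (simp add: power_add[symmetric])

lemma caseA:
  fixes q :: int and m k l :: nat and x y :: int
  assumes q2: "q \<ge> 2" and m3: "m > 3" and l1: "l \<ge> 1" and kl: "k + 1 + l < 2*m"
    and x1: "1 \<le> x" and xk: "x \<le> q^(k+1) - 1" and y1: "1 \<le> y" and yn: "y \<le> q^(2*m) - 1"
    and xy: "x*y < q^(2*m) - 1 - q^(m-1)"
  shows "R (q^l) (q^(2*m-l)) x * R (q^l) (q^(2*m-l)) y \<ge> q^(2*m) - 1 \<or>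
         (l \<le> m \<and> R (q^l) (q^(2*m-l)) x * R (q^l) (q^(2*m-l)) y \<ge> q^(2*m) - 1 - q^l)"
proof -
  define L where "L = 2*m - l"
  define p where "p = q^l"
  define P where "P = q^L"
  define N where "N = q^(2*m)"
  have Npos: "N \<ge> 1" unfolding N_def using q2 by simp
  have pP: "p*P = N" unfolding p_def P_def N_def L_def using kl pw_split by simp
  have qp: "q \<le> p" unfolding p_def using q2 l1 self_le_power[of q l] by simp
  have p2: "p \<ge> 2" using qp q2 by simp
  have P1: "P \<ge> 1" unfolding P_def using q2 by simp
  have LL: "L = Suc (L - 1)" using kl unfolding L_def by simp
  have PL: "P = q * q^(L-1)" unfolding P_def by (subst LL) simp
  have "q^(k+1) \<le> q^(L-1)" using q2 kl by (intro power_increasing) (auto simp: L_def)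
  hence xL: "x \<le> q^(L-1) - 1" using xk by simp
  have "q^(L-1) * 1 \<le> q^(L-1) * q" using q2 by (intro mult_left_mono) auto
  hence xP: "x < P" using xL PL by (simp add: mult.commute)
  have A: "R p P x = N - 1 - x*p" using R_small[OF _ P1 x1 xP] p2 pP by simp
  have "x*p \<le> (q^(L-1) - 1)*p" using xL p2 by (intro mult_right_mono) auto
  moreover have "2*(q^(L-1)*p) \<le> P*p" using PL q2 p2 by (simp add: mult_right_mono)
  ultimately have "2*(x*p) \<le> N - 2*p" using pP by (simp add: algebra_simps)
  hence A2: "2 * R p P x \<ge> N + 1" using A p2 by simp
  have yn': "y \<le> p*P - 1" using yn pP N_def by simp
  have xyN: "x*y < N - 1 - q^(m-1)" using xy N_def by simp
  show ?thesis
  proof (cases "R p P y \<ge> 2")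
    case True
    have "R p P x * R p P y \<ge> R p P x * 2" using True A2 Npos by (intro mult_left_mono) auto
    hence "R p P x * R p P y \<ge> N - 1" using A2 by simp
    thus ?thesis unfolding p_def P_def L_def N_def by simp
  next
    case False
    have ymod: "y mod P = P - 1"
    proof (rule ccontr)
      assume "y mod P \<noteq> P - 1"
      from R_ge_p[OF _ P1 y1 yn' this] p2 False show False by simp
    qed
    have B: "R p P y = p - 1 - y div P" and yy: "y = (y div P + 1)*P - 1"
      using R_eq[OF _ P1 y1 yn' ymod] p2 by auto
    have "R p P y \<ge> 0" using p2 P1 by (intro R_nn) (smt (verit) mult_le_cancel_left1)
    have "R p P y \<noteq> 0"
    proof
      assume "R p P y = 0"
      hence "y div P = p - 1" using B by simp
      hence "y = p*P - 1" using yy by (simp add: algebra_simps)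
      moreover have "y < N - 1"
      proof -
        have "1*y \<le> x*y" using x1 y1 by (intro mult_right_mono) auto
        moreover have "q^(m-1) \<ge> 1" using q2 by simp
        ultimately show ?thesis using xyN by simp
      qed
      ultimately show False using pP by simp
    qed
    hence B1: "R p P y = 1" using False \<open>R p P y \<ge> 0\<close> by simp
    hence "y div P = p - 2" using B by simp
    hence "y = (p - 1)*P - 1" using yy by simp
    moreover have "(p - 1)*P = p*P - P" by (simp add: algebra_simps)
    ultimately have yv: "y = N - 1 - P" using pP by linarith
    have "2*P \<le> N"
    proof -
      have "2*P \<le> q*P" using q2 P1 by simp
      also have "q*P \<le> N"
      proof -
        have "q*P \<le> p*P" using qp P1 by (intro mult_right_mono) auto
        thus ?thesis using pP by simp
      qed
      finally show ?thesis .
    qed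
    have "x = 1"
    proof (rule ccontr)
      assume "x \<noteq> 1"
      hence "x \<ge> 2" using x1 by simp
      have "y \<ge> 0" using y1 by simp
      hence "x*y \<ge> 2*y" using \<open>x \<ge> 2\<close> by (simp add: mult_right_mono)
      moreover have "q^(m-1) \<ge> 1" using q2 by simp
      ultimately show False using xyN yv \<open>2*P \<le> N\<close> by simp
    qed
    hence "P > q^(m-1)" using xyN yv by simp
    hence "m - 1 < L" unfolding P_def using q2 power_less_imp_less_exp[of q "m-1" L] by simp
    hence lm: "l \<le> m" unfolding L_def by simp
    have "R p P x * R p P y = N - 1 - p" using A B1 \<open>x = 1\<close> by simp
    thus ?thesis using lm unfolding p_def P_def L_def N_def by simp
  qed
qed


lemma div_lt_pow:
  fixes z P c :: int
  assumes "P \<ge> 1" "z < c * P" "z \<ge> 0"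
  shows "z div P < c"
proof -
  have "z div P * P \<le> z" using div_mult_mod_eq[of z P] pos_mod_sign[of P z] assms by linarith
  hence "z div P * P < c * P" using assms by linarith
  thus ?thesis using assms mult_right_less_imp_less[of "z div P" P c] by simp
qed

lemma caseW:
  fixes q :: int and m k l :: nat and x y :: int
  assumes q2: "q \<ge> 2" and km: "2*k \<le> 2*m - 1" and l1: "l \<ge> 1" and lm: "l \<le> 2*m - 1" and kl: "k + 1 + l > 2*m"
    and x1: "q^k \<le> x" and xk: "x \<le> q^(k+1) - 1" and y1: "1 \<le> y" and yn: "y \<le> q^(2*m) - 1"
    and xy: "x*y < q^(2*m)"
  shows "R (q^l) (q^(2*m-l)) x * R (q^l) (q^(2*m-l)) y \<ge> q^(2*m)"
proof -
  define L where "L = 2*m - l"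
  define p where "p = q^l"
  define P where "P = q^L"
  define N where "N = q^(2*m)"
  have pP: "p*P = N" unfolding p_def P_def N_def L_def using lm pw_split by simp
  have P1: "P \<ge> 1" unfolding P_def using q2 by simp
  have p1: "p \<ge> 1" unfolding p_def using q2 by simp
  have Lk: "L \<le> k" "L \<ge> 1" using kl lm l1 unfolding L_def by auto
  have pl: "p = q * q^(l-1)" unfolding p_def using l1 by (metis Suc_diff_1 less_le_trans zero_less_one power_Suc)
  have ql0: "q^(l-1) \<ge> 1" using q2 by simp
  have "2 * q^(l-1) \<le> q * q^(l-1)" using q2 ql0 by (intro mult_right_mono) auto
  hence pq: "p - q^(l-1) \<ge> q^(l-1)" using pl by simp
  have x0: "x \<ge> 1" using x1 q2 by (smt (verit) one_le_power)
  have "q^(k+1) = q^(k+1-L) * P" unfolding P_def using Lk by (simp add: power_add[symmetric])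
  hence "x div P < q^(k+1-L)" using xk P1 x0 by (intro div_lt_pow) auto
  moreover have "q^(k+1-L) \<le> q^(l-1)" using q2 Lk km lm unfolding L_def by (intro power_increasing) auto
  ultimately have xd: "x div P \<le> q^(l-1) - 1" by simp
  have "q^(k+1) \<le> q^(2*m)" using q2 km l1 lm by (intro power_increasing) auto
  hence xn: "x \<le> p*P - 1" using xk pP N_def by simp
  have A: "R p P x \<ge> q^(l-1)" using R_low[OF p1 P1 x0 xn] xd pq by simp
  have "q^k * y \<le> x * y" using x1 y1 by (intro mult_right_mono) auto
  moreover have "k + (l - k) = l" using km kl lm l1 by arith
  hence "q^k * q^(l-k) = p" unfolding p_def by (metis power_add)
  ultimately have "q^k * y < q^k * q^(l-k) * P"
    using xy pP N_def by simp
  hence "y < q^(l-k) * P" using q2 by (simp add: mult.assoc)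
  hence "y div P < q^(l-k)" using P1 y1 by (intro div_lt_pow) auto
  moreover have "q^(l-k) \<le> q^(l-1)" using q2 Lk by (intro power_increasing) auto
  ultimately have yd: "y div P \<le> q^(l-1) - 1" by simp
  have yn': "y \<le> p*P - 1" using yn pP N_def by simp
  have B: "R p P y \<ge> q^(l-1)" using R_low[OF p1 P1 y1 yn'] yd pq by simp
  have "R p P x * R p P y \<ge> q^(l-1) * q^(l-1)" using A B ql0 by (intro mult_mono) auto
  moreover have "q^(l-1) * q^(l-1) \<ge> q^(2*m)"
  proof -
    have "q^(l-1) * q^(l-1) = q^(2*(l-1))" by (simp add: power_add[symmetric] mult_2)
    moreover have "q^(2*(l-1)) \<ge> q^(2*m)" using q2 Lk km unfolding L_def by (intro power_increasing) auto
    ultimately show ?thesis by simp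
  qed
  ultimately show ?thesis unfolding p_def P_def L_def by simp
qed


lemma caseB:
  fixes q :: int and m k l :: nat and x y :: int
  assumes q2: "q \<ge> 2" and m3: "m > 3" and km: "2*k \<le> 2*m - 1" and kl: "k + 1 + l = 2*m"
    and x1: "q^k \<le> x" and xk: "x \<le> q^(k+1) - 1" and y1: "1 \<le> y" and yn: "y \<le> q^(2*m) - 1"
    and xy: "x*y < q^(2*m) - 1 - q^(m-1)"
  shows "(l \<ge> m + 1 \<longrightarrow> R (q^l) (q^(2*m-l)) x * R (q^l) (q^(2*m-l)) y \<ge> q^(2*m) - 1)
       \<and> R (q^l) (q^(2*m-l)) x * R (q^l) (q^(2*m-l)) y \<ge> (q^m - 1)^2"
proof -
  define L where "L = 2*m - l"
  define p where "p = q^l"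
  define P where "P = q^L"
  define N where "N = q^(2*m)"
  define Q where "Q = q^m"
  have lm: "l \<ge> m" "l \<le> 2*m - 1" using km kl m3 by auto
  have LL: "L = k + 1" unfolding L_def using kl by simp
  have pP: "p*P = N" unfolding p_def P_def N_def L_def using lm pw_split by simp
  have QQ: "Q*Q = N" unfolding Q_def N_def by (simp add: power_add[symmetric] mult_2)
  have P1: "P \<ge> 1" unfolding P_def using q2 by simp
  have p1: "p \<ge> 1" unfolding p_def using q2 by simp
  have pQ: "p \<ge> Q" unfolding p_def Q_def using q2 lm by (intro power_increasing) auto
  have Q4: "Q \<ge> 4"
  proof -
    have "q^m \<ge> q^2" using q2 m3 by (intro power_increasing) auto
    moreover have "q*q \<ge> 2*2" using q2 by (intro mult_mono) auto
    hence "q^2 \<ge> 4" by (simp add: power2_eq_square)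
    ultimately show ?thesis unfolding Q_def by simp
  qed
  have ineqQ: "(Q - 1)^2 \<le> N - 1" using QQ Q4 by (simp add: power2_eq_square algebra_simps)
  have "q^k \<ge> 1" using q2 by simp
  hence x0: "x \<ge> 1" using x1 by linarith
  have qm1: "q^(m-1) \<ge> 1" using q2 by simp
  have "Q*Q \<ge> Q*1" using Q4 by (intro mult_left_mono) auto
  hence N2: "N \<ge> 2" using QQ Q4 by simp
  have xP: "x < P" using xk LL P_def by simp
  have A: "R p P x = N - 1 - x*p" using R_small[OF p1 P1 x0 xP] pP by simp
  have "x*p \<le> (P - 1)*p" using xP p1 by (intro mult_right_mono) auto
  hence Ap: "R p P x \<ge> p - 1" using A pP by (simp add: algebra_simps)
  have yn': "y \<le> p*P - 1" using yn pP N_def by simp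
  have Bnn: "R p P y \<ge> 0" using pP N2 by (intro R_nn) simp
  have xyN: "x*y < N - 1 - q^(m-1)" using xy N_def by simp
  have goal: "(l \<ge> m + 1 \<longrightarrow> R p P x * R p P y \<ge> N - 1) \<and> R p P x * R p P y \<ge> (Q - 1)^2"
  proof (cases "y mod P = P - 1")
    case False
    have B: "R p P y \<ge> p" using R_ge_p[OF p1 P1 y1 yn' False] .
    have AB: "R p P x * R p P y \<ge> (p - 1) * p" using Ap B p1 by (intro mult_mono) auto
    have "(p - 1)*p \<ge> (Q - 1)*Q" using pQ Q4 by (intro mult_mono) auto
    moreover have "(Q - 1)*Q \<ge> (Q - 1)^2" using Q4 by (simp add: power2_eq_square)
    moreover have "l \<ge> m + 1 \<longrightarrow> (p - 1)*p \<ge> N"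
    proof
      assume "l \<ge> m + 1"
      hence "p \<ge> q * Q" unfolding p_def Q_def using q2 power_increasing[of "m+1" l q] by simp
      moreover have "q * Q \<ge> 2 * Q" using q2 Q4 by (intro mult_right_mono) auto
      ultimately have "p - 1 \<ge> Q" using Q4 by linarith
      hence "(p - 1)*p \<ge> Q * Q" using pQ Q4 by (intro mult_mono) auto
      thus "(p - 1)*p \<ge> N" using QQ by simp
    qed
    ultimately show ?thesis using AB by auto
  next
    case True
    have B: "R p P y = p - 1 - y div P" and yy: "y = (y div P + 1)*P - 1"
      using R_eq[OF p1 P1 y1 yn' True] by auto
    have y1n: "y div P \<ge> 0" using y1 P1 by (simp add: div_int_pos_iff)
    show ?thesis
    proof (cases "k = 0")
      case True
      hence Pq: "P = q" and lv: "l = 2*m - 1" using LL P_def kl by auto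
      have "1*y \<le> x*y" using x0 y1 by (intro mult_right_mono) auto
      hence "(y div P + 1)*q - 1 < p*q - 1 - q^(m-1)" using xyN yy Pq pP by simp
      moreover have "m - 1 = Suc (m-2)" using m3 by arith
      hence "q^(m-1) = q * q^(m-2)" by simp
      ultimately have "(y div P + 1)*q < (p - q^(m-2))*q" by (simp add: algebra_simps)
      from mult_right_less_imp_less[OF this] q2 have "y div P + 1 < p - q^(m-2)" by simp
      moreover have "q^(m-2) \<ge> q" using q2 m3 self_le_power[of q "m-2"] by simp
      ultimately have Bq: "R p P y \<ge> q + 1" using B by simp
      have "R p P x * R p P y \<ge> (p - 1)*(q+1)" using Ap Bq p1 q2 by (intro mult_mono) auto
      moreover have "(p - 1)*(q+1) \<ge> N - 1"
      proof -
        have "p*q = N" using pP Pq by simp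
        moreover have "p \<ge> q" using pQ Q4 q2 Q_def self_le_power[of q m] m3 by simp
        ultimately show ?thesis by (simp add: algebra_simps)
      qed
      ultimately have "R p P x * R p P y \<ge> N - 1" by simp
      thus ?thesis using ineqQ by simp
    next
      case k0: False
      show ?thesis
      proof (cases "l \<ge> m + 1")
        case lm1: True
        have "q^k * (y div P * P) \<le> x * y"
        proof -
          have "y div P * P \<le> y" using div_mult_mod_eq[of y P] pos_mod_sign[of P y] P1 by linarith
          thus ?thesis using x1 y1n P1 y1 q2 x0 by (intro mult_mono) auto
        qed
        hence "q^k * (y div P) * P < p * P" using xyN pP qm1 by (simp add: mult.assoc)
        from mult_right_less_imp_less[OF this] P1 have "q^k * (y div P) < p" by simp
        moreover have "k + (l - k) = l" using km kl by arith
        hence "p = q^k * q^(l-k)" unfolding p_def by (metis power_add)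
        ultimately have "y div P < q^(l-k)" using q2 by simp
        moreover have "q^(l-k) \<le> q^(l-1)" using q2 k0 by (intro power_increasing) auto
        ultimately have yd: "y div P \<le> q^(l-1) - 1" by simp
        have "l = Suc (l-1)" using lm m3 by arith
        hence pl: "p = q * q^(l-1)" unfolding p_def by (metis power_Suc)
        have ql0: "q^(l-1) \<ge> 1" using q2 by simp
        have "2 * q^(l-1) \<le> q * q^(l-1)" using q2 ql0 by (intro mult_right_mono) auto
        hence pq: "p - q^(l-1) \<ge> q^(l-1)" using pl by simp
        have Bq: "R p P y \<ge> q^(l-1)" using B yd pq by simp
        have Aq: "R p P x \<ge> q^(l-1)" using Ap pq ql0 by simp
        have "R p P x * R p P y \<ge> q^(l-1) * q^(l-1)" using Aq Bq ql0 by (intro mult_mono) auto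
        moreover have "q^(l-1) * q^(l-1) \<ge> N"
        proof -
          have "q^(l-1) * q^(l-1) = q^(2*(l-1))" by (simp add: power_add[symmetric] mult_2)
          moreover have "q^(2*(l-1)) \<ge> q^(2*m)" using q2 lm1 by (intro power_increasing) auto
          ultimately show ?thesis unfolding N_def by simp
        qed
        ultimately have "R p P x * R p P y \<ge> N - 1" by simp
        thus ?thesis using ineqQ by simp
      next
        case False
        hence lmm: "l = m" using lm by simp
        hence pQ': "p = Q" "P = Q" unfolding p_def P_def Q_def L_def by auto
        have "R p P x * R p P y \<ge> (Q - 1)^2"
        proof (cases "y div P = 0")
          case True
          hence "R p P y = Q - 1" using B pQ' by simp
          moreover have "R p P x \<ge> Q - 1" using Ap pQ' by simp
          ultimately show ?thesis using Q4 by (simp add: power2_eq_square mult_mono)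
        next
          case False
          define t where "t = y div P + 1"
          have t2: "t \<ge> 2" using False y1n t_def by simp
          have yt: "y = t*Q - 1" using yy t_def pQ' by simp
          have Bt: "R p P y = Q - t" using B t_def pQ' by simp
          have xQ: "x \<le> Q - 1" using xP pQ' by simp
          have "x*(t*Q - 1) < Q*Q" using xyN yt QQ qm1 by simp
          hence "(x*t)*Q < Q*Q + x" by (simp add: algebra_simps)
          hence "(x*t)*Q < (Q+1)*Q" using xQ by (simp add: algebra_simps)
          from mult_right_less_imp_less[OF this] Q4 have "x*t < Q + 1" by simp
          hence xt: "x*t \<le> Q" by simp
          have "x*2 \<le> x*t" using x0 t2 by (intro mult_left_mono) auto
          hence x2: "2*x \<le> Q" using xt by simp
          have "2*t \<le> x*t"
          proof -
            have "q^k \<ge> 2" using q2 k0 self_le_power[of q k] by simp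
            hence "x \<ge> 2" using x1 by simp
            thus ?thesis using t2 by (intro mult_right_mono) auto
          qed
          hence "2*t \<le> Q" using xt by simp
          hence Bt2: "R p P y \<ge> 2" using Bt Q4 by simp
          have "(2*x)*Q \<le> Q*Q" using x2 Q4 by (intro mult_right_mono) auto
          hence "2*(x*Q) \<le> Q*Q" by (simp add: mult.assoc)
          hence A2: "2 * R p P x \<ge> Q*Q - 2" using A pQ' QQ by (simp add: algebra_simps)
          have "R p P x \<ge> 0" using A2 N2 QQ by linarith
          hence "R p P x * R p P y \<ge> R p P x * 2" using Bt2 by (intro mult_left_mono) auto
          hence "R p P x * R p P y \<ge> Q*Q - 2" using A2 by simp
          moreover have "Q*Q - 2 \<ge> (Q-1)^2" using Q4 by (simp add: power2_eq_square algebra_simps)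
          ultimately show ?thesis by simp
        qed
        thus ?thesis using lmm by simp
      qed
    qed
  qed
  thus ?thesis unfolding p_def P_def L_def N_def Q_def by simp
qed


lemma fvalR: "l \<le> 2*m \<Longrightarrow> fval q m x y l = R (int q ^ l) (int q ^ (2*m-l)) x * R (int q ^ l) (int q ^ (2*m-l)) y"
  unfolding fval_def nn_def R_def using pw_split[of l m "int q"] by simp

lemma eqlem:
  fixes p P N :: int
  assumes "p*P = N" "p \<ge> 1" "P \<ge> 1" "p \<le> N - 2" "P \<le> N - 2"
  shows "R p P 1 = N - 1 - p" "R p P (N - 1 - P) = 1"
proof -
  have e1: "- 1 * p = (N - 1 - p) + (-1)*(N - 1)" by simp
  have "R p P 1 = ((N - 1 - p) + (-1)*(N - 1)) mod (N - 1)" unfolding R_def assms(1) by (simp only: e1)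
  also have "\<dots> = (N - 1 - p) mod (N - 1)" by (rule mod_mult_self1)
  also have "\<dots> = N - 1 - p" using assms by (intro mod_pos_pos_trivial) auto
  finally show "R p P 1 = N - 1 - p" .
  have e2: "- (N - 1 - P) * p = 1 + (1 - p)*(N - 1)" using assms(1) by (simp add: algebra_simps)
  have "R p P (N - 1 - P) = (1 + (1 - p)*(N - 1)) mod (N - 1)" unfolding R_def assms(1) by (simp only: e2)
  also have "\<dots> = 1 mod (N - 1)" by (rule mod_mult_self1)
  also have "\<dots> = 1" using assms by simp
  finally show "R p P (N - 1 - P) = 1" .
qed

theorem lemma9:
  fixes q m :: nat
  assumes "primepow q" and "m > 3"
  shows
   "(\<forall>k x y l. 2*k \<le> 2*m - 1 \<longrightarrow> (x, y) \<in> Zdesk q m k \<longrightarrow>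
        odd l \<longrightarrow> 1 \<le> l \<longrightarrow> l \<le> 2*m - 1 \<longrightarrow> l \<noteq> 2*m - k - 1 \<longrightarrow>
        (even m \<longrightarrow> fval q m x y l \<ge> int q ^ (2*m) - 1 - int q ^ (m - 1)) \<and>
        (odd m \<longrightarrow> fval q m x y l \<ge> int q ^ (2*m) - 1 - int q ^ m))
  \<and> (even m \<longrightarrow>
        (1, int q ^ (2*m) - 1 - int q ^ (2*m - (m - 1))) \<in> Zdesk q m 0 \<and>
        fval q m 1 (int q ^ (2*m) - 1 - int q ^ (2*m - (m - 1))) (m - 1)
          = int q ^ (2*m) - 1 - int q ^ (m - 1))
  \<and> (odd m \<longrightarrow>
        (1, int q ^ (2*m) - 1 - int q ^ (2*m - m)) \<in> Zdesk q m 0 \<and>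
        fval q m 1 (int q ^ (2*m) - 1 - int q ^ (2*m - m)) m
          = int q ^ (2*m) - 1 - int q ^ m)
  \<and> (\<forall>k x y. 2*k \<le> 2*m - 1 \<longrightarrow> (x, y) \<in> Zdesk q m k \<longrightarrow> odd (2*m - k - 1) \<longrightarrow>
        (odd m \<longrightarrow> fval q m x y (2*m - k - 1) \<ge> (int q ^ m - 1)^2) \<and>
        (even m \<longrightarrow> fval q m x y (2*m - k - 1) \<ge> int q ^ (2*m) - 1))
  \<and> (odd m \<longrightarrow>
        (int q ^ m - 1, int q ^ m - 1) \<in> Zdesk q m (m - 1) \<and>
        2*m - (m - 1) - 1 = m \<and>
        fval q m (int q ^ m - 1) (int q ^ m - 1) m = (int q ^ m - 1)^2)"
proof -
  have qn: "q \<ge> 2" using primepow_gt_Suc_0[OF assms(1)] by simp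
  define qi where "qi = int q"
  have q2: "qi \<ge> 2" using qn qi_def by simp
  have m3: "m > 3" by fact
  define N where "N = qi^(2*m)"
  have qm1: "qi^(m-1) \<ge> 1" using q2 by simp
  have Zd: "(x,y) \<in> Zdesk q m k \<longleftrightarrow> 1 \<le> x \<and> x \<le> N - 1 \<and> 1 \<le> y \<and> y \<le> N - 1 \<and>
     x*y < N - 1 - qi^(m-1) \<and> qi^k - 1 < x \<and> x \<le> qi^(k+1) - 1" for x y k
    unfolding Zdesk_def Zdes_def nn_def N_def qi_def by auto
  have PN: "qi^j \<le> N - 2" if "j < 2*m" for j
  proof -
    have "qi^(j+1) \<le> N" unfolding N_def using q2 that by (intro power_increasing) auto
    moreover have "qi^(j+1) \<ge> 2 * qi^j" using q2 by simp
    moreover have "N \<ge> 4"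
    proof -
      have "qi^2 \<le> N" unfolding N_def using q2 m3 by (intro power_increasing) auto
      moreover have "qi*qi \<ge> 2*2" using q2 by (intro mult_mono) auto
      ultimately show ?thesis by (simp add: power2_eq_square)
    qed
    ultimately show ?thesis by linarith
  qed
  show ?thesis
    apply (intro conjI)
    subgoal
  proof (intro allI impI)
    fix k x y l
    assume km: "2*k \<le> 2*m - 1" and Z: "(x, y) \<in> Zdesk q m k" and ol: "odd l" and l1: "1 \<le> l"
      and lm: "l \<le> 2*m - 1" and lk: "l \<noteq> 2*m - k - 1"
    from Z have x1: "1 \<le> x" and xn: "x \<le> N - 1" and y1: "1 \<le> y" and yn: "y \<le> N - 1"
      and xy: "x*y < N - 1 - qi^(m-1)" and xk0: "qi^k - 1 < x" and xk: "x \<le> qi^(k+1) - 1"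
      unfolding Zd by auto
    have fv: "fval q m x y l = R (qi ^ l) (qi ^ (2*m-l)) x * R (qi ^ l) (qi ^ (2*m-l)) y"
      using fvalR lm qi_def by simp
    have main: "fval q m x y l \<ge> N - 1 \<or> (l \<le> m \<and> fval q m x y l \<ge> N - 1 - qi^l)"
    proof (cases "k + 1 + l < 2*m")
      case True
      from caseA[OF q2 m3 l1 True x1 xk y1] yn xy show ?thesis unfolding fv N_def by simp
    next
      case False
      hence kl: "k + 1 + l > 2*m" using lk by arith
      have xk1: "qi^k \<le> x" using xk0 by simp
      have "x*y < qi^(2*m)" using xy qm1 N_def by simp
      from caseW[OF q2 km l1 lm kl xk1 xk y1] yn this have "fval q m x y l \<ge> qi^(2*m)"
        unfolding fv N_def by simp
      thus ?thesis unfolding N_def by simp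
    qed
    show "(even m \<longrightarrow> fval q m x y l \<ge> int q ^ (2*m) - 1 - int q ^ (m - 1)) \<and>
        (odd m \<longrightarrow> fval q m x y l \<ge> int q ^ (2*m) - 1 - int q ^ m)"
    proof (intro conjI impI)
      assume em: "even m"
      hence "l \<noteq> m" using ol by auto
      hence "l \<le> m \<longrightarrow> qi^l \<le> qi^(m-1)" using q2 by (intro impI power_increasing) auto
      thus "fval q m x y l \<ge> int q ^ (2*m) - 1 - int q ^ (m - 1)"
        using main qm1 unfolding N_def qi_def by auto
    next
      assume "odd m"
      have "l \<le> m \<longrightarrow> qi^l \<le> qi^m" using q2 by (intro impI power_increasing) auto
      moreover have "qi^m \<ge> 0" using q2 by simp
      ultimately show "fval q m x y l \<ge> int q ^ (2*m) - 1 - int q ^ m"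
        using main unfolding N_def qi_def by (smt (verit))
    qed
  qed
    subgoal
    proof (intro impI conjI)
      assume em: "even m"
      have e: "2*m - (m-1) = m+1" using m3 by simp
      have lt: "qi^(m-1) < qi^(m+1)" using q2 m3 by (intro power_strict_increasing) auto
      have pn: "qi^(m+1) \<le> N - 2" using PN[of "m+1"] m3 by simp
      have pn2: "qi^(m-1) \<le> N - 2" using PN[of "m-1"] m3 by simp
      have h1: "qi^(m+1) \<ge> 1" using q2 one_le_power[of qi "m+1"] by linarith
      show "(1, int q ^ (2*m) - 1 - int q ^ (2*m - (m - 1))) \<in> Zdesk q m 0"
        unfolding Zd e qi_def[symmetric] N_def[symmetric] using lt pn q2 h1 by simp
      have "fval q m 1 (N - 1 - qi^(m+1)) (m-1) = R (qi^(m-1)) (qi^(m+1)) 1 * R (qi^(m-1)) (qi^(m+1)) (N - 1 - qi^(m+1))"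
        using fvalR[of "m-1" m q] e unfolding qi_def by simp
      also have "\<dots> = N - 1 - qi^(m-1)"
      proof -
        have "m - 1 + (m + 1) = 2*m" using m3 by simp
        hence pp: "qi^(m-1) * qi^(m+1) = N" unfolding N_def by (metis power_add)
        have "qi^(m-1) \<ge> 1" "qi^(m+1) \<ge> 1" using qm1 h1 by auto
        from eqlem[OF pp this pn2 pn] show ?thesis by simp
      qed
      finally show "fval q m 1 (int q ^ (2*m) - 1 - int q ^ (2*m - (m - 1))) (m - 1) = int q ^ (2*m) - 1 - int q ^ (m - 1)"
        unfolding e qi_def N_def by simp
    qed
    subgoal
    proof (intro impI conjI)
      assume om: "odd m"
      have e: "2*m - m = m" by simp
      have lt: "qi^(m-1) < qi^m" using q2 m3 by (intro power_strict_increasing) auto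
      have pn: "qi^m \<le> N - 2" using PN[of "m"] m3 by simp
      have h2: "qi^m \<ge> 1" using q2 one_le_power[of qi m] by linarith
      show "(1, int q ^ (2*m) - 1 - int q ^ (2*m - m)) \<in> Zdesk q m 0"
        unfolding Zd e qi_def[symmetric] N_def[symmetric] using lt pn q2 h2 by (simp; insert h2 pn; linarith)
      have "fval q m 1 (N - 1 - qi^m) m = R (qi^m) (qi^m) 1 * R (qi^m) (qi^m) (N - 1 - qi^m)"
        using fvalR[of "m" m q] e unfolding qi_def by simp
      also have "\<dots> = N - 1 - qi^m"
      proof -
        have pp: "qi^m * qi^m = N" unfolding N_def by (simp add: power_add[symmetric] mult_2)
        from eqlem[OF pp h2 h2 pn pn] show ?thesis by simp
      qed
      finally show "fval q m 1 (int q ^ (2*m) - 1 - int q ^ (2*m - m)) m = int q ^ (2*m) - 1 - int q ^ m"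
        unfolding e qi_def N_def by simp
    qed
    subgoal
    proof (intro allI impI)
      fix k x y
      assume km: "2*k \<le> 2*m - 1" and Z: "(x, y) \<in> Zdesk q m k" and ol: "odd (2*m - k - 1)"
      from Z have x1: "1 \<le> x" and xn: "x \<le> N - 1" and y1: "1 \<le> y" and yn: "y \<le> N - 1"
        and xy: "x*y < N - 1 - qi^(m-1)" and xk0: "qi^k - 1 < x" and xk: "x \<le> qi^(k+1) - 1"
        unfolding Zd by auto
      define l where "l = 2*m - k - 1"
      have kl: "k + 1 + l = 2*m" using km m3 unfolding l_def by arith
      have xk1: "qi^k \<le> x" using xk0 by simp
      from caseB[OF q2 m3 km kl xk1 xk y1] yn xy
      have cB: "(l \<ge> m + 1 \<longrightarrow> fval q m x y l \<ge> N - 1) \<and> fval q m x y l \<ge> (qi^m - 1)^2"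
        using fvalR[of l m q x y] kl unfolding N_def qi_def by simp
      show "(odd m \<longrightarrow> fval q m x y (2*m - k - 1) \<ge> (int q ^ m - 1)^2) \<and>
        (even m \<longrightarrow> fval q m x y (2*m - k - 1) \<ge> int q ^ (2*m) - 1)"
      proof (intro conjI impI)
        show "fval q m x y (2*m - k - 1) \<ge> (int q ^ m - 1)^2" using cB unfolding l_def qi_def by simp
      next
        assume "even m"
        hence "l \<ge> m + 1" using ol km m3 unfolding l_def by presburger
        thus "fval q m x y (2*m - k - 1) \<ge> int q ^ (2*m) - 1" using cB unfolding l_def qi_def N_def by simp
      qed
    qed
    subgoal
    proof (intro impI conjI)
      assume om: "odd m"
      define Q where "Q = qi^m"
      have QQ: "Q*Q = N" unfolding N_def Q_def by (simp add: power_add[symmetric] mult_2)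
      have Qm: "Q = qi * qi^(m-1)" unfolding Q_def using m3 by (metis Suc_pred' less_trans zero_less_numeral power_Suc)
      have "qi * qi^(m-1) \<ge> 2 * qi^(m-1)" using q2 qm1 by (intro mult_right_mono) auto
      hence Q2: "Q \<ge> 2 * qi^(m-1)" using Qm by simp
      have Q1: "Q \<ge> 2" using Q2 qm1 by simp
      have "(Q - 1)*(Q - 1) < N - 1 - qi^(m-1)" using QQ Q2 qm1 by (simp add: algebra_simps)
      moreover have "Q \<le> N - 2" unfolding Q_def using PN[of m] m3 by simp
      moreover have "m - 1 + 1 = m" using m3 by simp
      ultimately show "(int q ^ m - 1, int q ^ m - 1) \<in> Zdesk q m (m - 1)"
        unfolding Zd qi_def[symmetric] Q_def[symmetric] using Q2 Q1 qm1 by (simp add: Q_def)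
      show "2*m - (m - 1) - 1 = m" using m3 by simp
      have "fval q m (Q - 1) (Q - 1) m = R Q Q (Q - 1) * R Q Q (Q - 1)"
        using fvalR[of m m q] unfolding qi_def Q_def by simp
      also have "R Q Q (Q - 1) = Q - 1"
      proof -
        have "R Q Q (Q - 1) = Q*Q - 1 - (Q - 1)*Q" using R_small[of Q Q "Q - 1"] Q1 by simp
        thus ?thesis by (simp add: algebra_simps)
      qed
      finally show "fval q m (int q ^ m - 1) (int q ^ m - 1) m = (int q ^ m - 1)^2"
        unfolding Q_def qi_def by (simp add: power2_eq_square)
    qed
    done
qed

end
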